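(* Let $\mathcal N$ be a finite network and let $\mathcal I=\mathcal N.\omega$ be the outcome of a run of the reduction process $\omega$. Let $y$ be a node of $\mathcal I$ that is not isolated in $\mathcal I$. Then either (1) there is a chordless cycle $C$ in $\mathcal I$ of length $k\ge 4$ with $y\in C$, or (2) there are chordless cycles $C_1,C_2$ in $\mathcal I$, each of length at least $4$, and nodes $x\in C_1$, $z\in C_2$ such that $y$ lies on a path in $\mathcal I$ from $x$ to $z$.
   Context: A network $\mathcal N=(N,E)$ is a finite simple undirected graph. For a graph $G$ and a set $Y$ of its nodes, the neighborhood is $Y.\eta=\{z\notin Y:\exists y\in Y,\ (y,z)\text{ an edge of }G\}$, the region is $Y.\rho=Y\cup Y.\eta$, and the neighborhood closure is $Y.\varphi=\{z\in Y.\rho:\{z\}.\rho\subseteq Y.\rho\}$ (all computed in $G$). A node $z$ is subsumed by a node $y\neq z$ in $G$ if $\{z\}.\varphi\subseteq\{y\}.\varphi$; equivalently, $z\in\{y\}.\eta$ and $\{z\}.\eta\subseteq\{y\}.\rho$. The reduction process $\omega$: set $G_0=\mathcal N$; as long as the current graph $G_i$ (an induced subgraph of $\mathcal N$) contains distinct nodes $y,z$ with $z$ subsumed by $y$ in $G_i$, choose such a pair and let $G_{i+1}$ be obtained from $G_i$ by deleting $z$ and its incident edges; when no such pair exists, stop. The final graph is denoted $\mathcal N.\omega$. A cycle $\langle y_1,\dots,y_k,y_1\rangle$ is a closed simple path of length $k$; a chord is an edge $(y_i,y_j)$ between two nodes of the cycle that are not consecutive on it; a cycle is chordless if it has no chord.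 *)

theory Defs
  imports Main
begin

text \<open>Every graph occurring in the reduction process is an induced subgraph of the network,
hence is determined by its node set V \<subseteq> N; edges of it are the E-edges between nodes of V.\<close>

definition network :: "'a set \<Rightarrow> ('a \<times> 'a) set \<Rightarrow> bool" where
  "network N E \<longleftrightarrow> finite N \<and> E \<subseteq> N \<times> N \<and> sym E \<and> irrefl E"

definition nbhd :: "('a \<times> 'a) set \<Rightarrow> 'a set \<Rightarrow> 'a set \<Rightarrow> 'a set" where
  "nbhd E V Y = {z \<in> V. z \<notin> Y \<and> (\<exists>y\<in>Y. (y, z) \<in> E)}"

definition region :: "('a \<times> 'a) set \<Rightarrow> 'a set \<Rightarrow> 'a set \<Rightarrow> 'a set" where
  "region E V Y = Y \<union> nbhd E V Y"

definition nclosure :: "('a \<times> 'a) set \<Rightarrow> 'a set \<Rightarrow> 'a set \<Rightarrow> 'a set" where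
  "nclosure E V Y = {z \<in> region E V Y. region E V {z} \<subseteq> region E V Y}"

definition subsumed :: "('a \<times> 'a) set \<Rightarrow> 'a set \<Rightarrow> 'a \<Rightarrow> 'a \<Rightarrow> bool" where
  "subsumed E V z y \<longleftrightarrow> z \<in> V \<and> y \<in> V \<and> z \<noteq> y \<and> nclosure E V {z} \<subseteq> nclosure E V {y}"

definition reduce_step :: "('a \<times> 'a) set \<Rightarrow> 'a set \<Rightarrow> 'a set \<Rightarrow> bool" where
  "reduce_step E V V' \<longleftrightarrow> (\<exists>y z. subsumed E V z y \<and> V' = V - {z})"

definition omega_outcome :: "'a set \<Rightarrow> ('a \<times> 'a) set \<Rightarrow> 'a set \<Rightarrow> bool" where
  "omega_outcome N E I \<longleftrightarrow> (reduce_step E)\<^sup>*\<^sup>* N I \<and> \<not> (\<exists>y z. subsumed E I z y)"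

definition is_cycle :: "('a \<times> 'a) set \<Rightarrow> 'a set \<Rightarrow> 'a list \<Rightarrow> bool" where
  "is_cycle E V cs \<longleftrightarrow> length cs \<ge> 3 \<and> distinct cs \<and> set cs \<subseteq> V \<and>
     (\<forall>i < length cs. (cs ! i, cs ! ((i + 1) mod length cs)) \<in> E)"

definition chordless_cycle :: "('a \<times> 'a) set \<Rightarrow> 'a set \<Rightarrow> 'a list \<Rightarrow> bool" where
  "chordless_cycle E V cs \<longleftrightarrow> is_cycle E V cs \<and>
     (\<forall>i < length cs. \<forall>j < length cs.
        i \<noteq> j \<and> j \<noteq> (i + 1) mod length cs \<and> i \<noteq> (j + 1) mod length cs
        \<longrightarrow> (cs ! i, cs ! j) \<notin> E)"

definition is_path :: "('a \<times> 'a) set \<Rightarrow> 'a set \<Rightarrow> 'a list \<Rightarrow> 'a \<Rightarrow> 'a \<Rightarrow> bool" where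
  "is_path E V ps x z \<longleftrightarrow> ps \<noteq> [] \<and> hd ps = x \<and> last ps = z \<and> distinct ps \<and>
     set ps \<subseteq> V \<and> (\<forall>i. Suc i < length ps \<longrightarrow> (ps ! i, ps ! Suc i) \<in> E)"

end

theory Submission
  imports Defs
begin

definition ind :: "('a \<times> 'a) set \<Rightarrow> 'a set \<Rightarrow> 'a list \<Rightarrow> bool" where
  "ind E V ps \<longleftrightarrow> distinct ps \<and> set ps \<subseteq> V \<and>
     (\<forall>i<length ps. \<forall>j<length ps. (ps!i, ps!j) \<in> E \<longleftrightarrow> (j = Suc i \<or> i = Suc j))"

lemma ind_rev: "ind E V ps \<Longrightarrow> ind E V (rev ps)"
  unfolding ind_def
proof (intro conjI allI impI)
  assume a: "distinct ps \<and> set ps \<subseteq> V \<and>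
     (\<forall>i<length ps. \<forall>j<length ps. (ps!i, ps!j) \<in> E \<longleftrightarrow> (j = Suc i \<or> i = Suc j))"
  then show "distinct (rev ps)" "set (rev ps) \<subseteq> V" by auto
  fix i j assume i: "i < length (rev ps)" and j: "j < length (rev ps)"
  have "(rev ps ! i, rev ps ! j) = (ps ! (length ps - Suc i), ps ! (length ps - Suc j))"
    using i j by (simp add: rev_nth)
  moreover have "(ps ! (length ps - Suc i), ps ! (length ps - Suc j)) \<in> E \<longleftrightarrow>
     (length ps - Suc j = Suc (length ps - Suc i) \<or> length ps - Suc i = Suc (length ps - Suc j))"
    using a i j by auto
  moreover have "(length ps - Suc j = Suc (length ps - Suc i) \<or> length ps - Suc i = Suc (length ps - Suc j))
     \<longleftrightarrow> (j = Suc i \<or> i = Suc j)"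
    using i j by (simp only: length_rev) arith
  ultimately show "(rev ps ! i, rev ps ! j) \<in> E \<longleftrightarrow> (j = Suc i \<or> i = Suc j)"
    by simp
qed

lemma ind_drop: "ind E V ps \<Longrightarrow> ind E V (drop k ps)"
  unfolding ind_def
proof (intro conjI allI impI)
  assume a: "distinct ps \<and> set ps \<subseteq> V \<and>
     (\<forall>i<length ps. \<forall>j<length ps. (ps!i, ps!j) \<in> E \<longleftrightarrow> (j = Suc i \<or> i = Suc j))"
  then show "distinct (drop k ps)" "set (drop k ps) \<subseteq> V"
    by (auto dest: in_set_dropD)
  fix i j assume i: "i < length (drop k ps)" and j: "j < length (drop k ps)"
  have "(ps ! (k+i), ps ! (k+j)) \<in> E \<longleftrightarrow> (k+j = Suc (k+i) \<or> k+i = Suc (k+j))"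
    using a i j by auto
  then show "(drop k ps ! i, drop k ps ! j) \<in> E \<longleftrightarrow> (j = Suc i \<or> i = Suc j)"
    using i j by auto
qed

lemma ind_path:
  assumes a: "ind E V ps" and ne: "ps \<noteq> []"
  shows "is_path E V ps (hd ps) (last ps)"
proof -
  have "\<forall>i. Suc i < length ps \<longrightarrow> (ps ! i, ps ! Suc i) \<in> E"
  proof (intro allI impI)
    fix i assume "Suc i < length ps"
    then show "(ps ! i, ps ! Suc i) \<in> E" using a unfolding ind_def by simp
  qed
  then show ?thesis using a ne unfolding ind_def is_path_def by simp
qed

lemma cycle_lemma:
  assumes s: "sym E" and Q: "ind E V Q" and len: "length Q \<ge> 3" and r: "r \<notin> set Q" "r \<in> V"
    and h: "(r, hd Q) \<in> E" and l: "(r, last Q) \<in> E"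
    and mid: "\<forall>j. 0 < j \<and> j < length Q - 1 \<longrightarrow> (r, Q!j) \<notin> E"
  shows "chordless_cycle E V (Q @ [r])"
proof -
  define n where "n = length Q"
  have Qi: "distinct Q" "set Q \<subseteq> V"
    "\<And>i j. i<n \<Longrightarrow> j<n \<Longrightarrow> (Q!i, Q!j) \<in> E \<longleftrightarrow> (j = Suc i \<or> i = Suc j)"
    using Q unfolding ind_def n_def by auto
  have n3: "n \<ge> 3" using len n_def by simp
  have L: "length (Q @ [r]) = Suc n" by (simp add: n_def)
  have nth: "\<And>t. t < Suc n \<Longrightarrow> (Q @ [r]) ! t = (if t < n then Q ! t else r)"
    by (simp add: nth_append n_def)
  have Qne: "Q \<noteq> []" using n3 n_def by auto
  have hd0: "hd Q = Q ! 0" using Qne by (simp add: hd_conv_nth)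
  have last0: "last Q = Q ! (n - 1)" using Qne n_def by (simp add: last_conv_nth)
  have symE: "\<And>a b. (a,b) \<in> E \<Longrightarrow> (b,a) \<in> E" using s by (auto simp: sym_def)
  have cyc: "is_cycle E V (Q @ [r])"
    unfolding is_cycle_def L
  proof (intro conjI allI impI)
    show "3 \<le> Suc n" using n3 by simp
    show "distinct (Q @ [r])" using Qi r by simp
    show "set (Q @ [r]) \<subseteq> V" using Qi r by simp
    fix t assume t: "t < Suc n"
    show "((Q @ [r]) ! t, (Q @ [r]) ! ((t + 1) mod Suc n)) \<in> E"
    proof (cases "t < n - 1")
      case True
      then have "(t+1) mod Suc n = Suc t" by simp
      then show ?thesis using True Qi(3)[of t "Suc t"] nth t by auto
    next
      case False
      show ?thesis
      proof (cases "t = n - 1")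
        case True
        then have "(t+1) mod Suc n = n" using n3 by simp
        then show ?thesis using True nth t n3 symE[OF l] last0 by auto
      next
        case False
        then have "t = n" using \<open>\<not> t < n - 1\<close> t by simp
        then show ?thesis using nth h hd0 n3 by simp
      qed
    qed
  qed
  show ?thesis
    unfolding chordless_cycle_def L
  proof (intro conjI cyc allI impI)
    fix t s assume t: "t < Suc n" and sn: "s < Suc n"
      and c: "t \<noteq> s \<and> s \<noteq> (t + 1) mod Suc n \<and> t \<noteq> (s + 1) mod Suc n"
    show "((Q @ [r]) ! t, (Q @ [r]) ! s) \<notin> E"
    proof (cases "t < n")
      case tn: True
      show ?thesis
      proof (cases "s < n")
        case True
        then show ?thesis using tn c Qi(3)[of t s] nth t sn by auto
      next
        case False
        then have "s = n" using sn by simp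
        then have "0 < t" "t < n - 1" using c tn n3 by (auto split: if_splits)
        then have "(r, Q!t) \<notin> E" using mid n_def by auto
        then show ?thesis using \<open>s = n\<close> tn nth symE by auto
      qed
    next
      case False
      then have "t = n" using t by simp
      then have "0 < s" "s < n - 1" using c sn n3 by (auto split: if_splits)
      then have "(r, Q!s) \<notin> E" using mid n_def by auto
      then show ?thesis using \<open>t = n\<close> nth[of t] nth[of s] sn \<open>s < n - 1\<close> by auto
    qed
  qed
qed



lemma nonsub:
  assumes s: "sym E" and zV: "z \<in> V" and wV: "w \<in> V" and zw: "z \<noteq> w" and e: "(w,z) \<in> E"
    and ns: "\<not> subsumed E V z w"
  shows "\<exists>r\<in>V. (z,r) \<in> E \<and> r \<noteq> w \<and> (w,r) \<notin> E"
proof (rule ccontr)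
  assume c: "\<not> ?thesis"
  have reg: "region E V {z} \<subseteq> region E V {w}"
  proof
    fix v assume v: "v \<in> region E V {z}"
    show "v \<in> region E V {w}"
    proof (cases "v = z")
      case True then show ?thesis using zV zw e unfolding region_def nbhd_def by auto
    next
      case False
      then have "v \<in> V" "(z,v) \<in> E" using v unfolding region_def nbhd_def by auto
      then show ?thesis using c unfolding region_def nbhd_def by auto
    qed
  qed
  have "nclosure E V {z} \<subseteq> nclosure E V {w}"
    using reg unfolding nclosure_def by blast
  then show False using ns zV wV zw unfolding subsumed_def by blast
qed

lemma end_cycle:
  assumes s: "sym E" and irr: "irrefl E" and ns: "\<not> (\<exists>y z. subsumed E I z y)"
    and P: "ind E I P" and len: "length P \<ge> 2" and yP: "y \<in> set P"
    and mx: "\<forall>Q. ind E I Q \<and> y \<in> set Q \<longrightarrow> length Q \<le> length P"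
  shows "\<exists>C. chordless_cycle E I C \<and> length C \<ge> 4 \<and> last P \<in> set C"
proof -
  define m where "m = length P - 1"
  have lenm: "length P = Suc m" "m \<ge> 1" using len m_def by auto
  have Pi: "distinct P" "set P \<subseteq> I"
    "\<And>i j. i < Suc m \<Longrightarrow> j < Suc m \<Longrightarrow> (P!i, P!j) \<in> E \<longleftrightarrow> (j = Suc i \<or> i = Suc j)"
    using P lenm unfolding ind_def by auto
  have symE: "\<And>a b. (a,b) \<in> E \<Longrightarrow> (b,a) \<in> E" using s by (auto simp: sym_def)
  have irrE: "\<And>a. (a,a) \<notin> E" using irr by (auto simp: irrefl_def)
  define a where "a = P ! (m - 1)"
  define b where "b = P ! m"
  have aI: "a \<in> I" "b \<in> I" using Pi lenm unfolding a_def b_def by auto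
  have ab: "(a,b) \<in> E" using Pi(3)[of "m-1" m] lenm unfolding a_def b_def by auto
  have anb: "b \<noteq> a" using ab irrE by auto
  have lastb: "last P = b" using lenm unfolding b_def by (metis diff_Suc_1 last_conv_nth list.size(3) nat.distinct(1))
  obtain r where r: "r \<in> I" "(b,r) \<in> E" "r \<noteq> a" "(a,r) \<notin> E"
    using nonsub[OF s aI(2) aI(1) anb ab] ns by blast
  have rP: "r \<notin> set P"
  proof
    assume "r \<in> set P"
    then obtain j where j: "j < Suc m" "P ! j = r" using lenm by (metis in_set_conv_nth)
    show False
    proof (cases "j = m")
      case True then show ?thesis using j r irrE unfolding b_def by auto
    next
      case False
      show ?thesis
      proof (cases "j = m - 1")
        case True then show ?thesis using j r unfolding a_def by auto
      next
        case False
        then have "(P!m, P!j) \<notin> E" using Pi(3)[of m j] j \<open>j \<noteq> m\<close> by auto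
        then show ?thesis using j r unfolding b_def by auto
      qed
    qed
  qed
  have exi: "\<exists>i. i \<le> m - 2 \<and> (r, P!i) \<in> E"
  proof (rule ccontr)
    assume c: "\<not> ?thesis"
    have nthr: "\<And>t. t < Suc (Suc m) \<Longrightarrow> (P @ [r]) ! t = (if t < Suc m then P ! t else r)"
      using lenm by (simp add: nth_append)
    have "ind E I (P @ [r])"
      unfolding ind_def
    proof (intro conjI allI impI)
      show "distinct (P @ [r])" using Pi rP by simp
      show "set (P @ [r]) \<subseteq> I" using Pi r by simp
      fix i j assume i: "i < length (P @ [r])" and j: "j < length (P @ [r])"
      then have i': "i < Suc (Suc m)" and j': "j < Suc (Suc m)" using lenm by auto
      have rel: "\<And>t. t < Suc m \<Longrightarrow> (r, P!t) \<in> E \<longleftrightarrow> t = m"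
      proof -
        fix t assume t: "t < Suc m"
        show "(r, P!t) \<in> E \<longleftrightarrow> t = m"
        proof (cases "t = m")
          case True then show ?thesis using r symE unfolding b_def by auto
        next
          case False
          show ?thesis
          proof (cases "t = m - 1")
            case True then show ?thesis using r symE False unfolding a_def by auto
          next
            case False
            then have "t \<le> m - 2" using t \<open>t \<noteq> m\<close> by auto
            then show ?thesis using c \<open>t \<noteq> m\<close> by auto
          qed
        qed
      qed
      show "((P @ [r]) ! i, (P @ [r]) ! j) \<in> E \<longleftrightarrow> (j = Suc i \<or> i = Suc j)"
      proof (cases "i < Suc m")
        case ti: True
        show ?thesis
        proof (cases "j < Suc m")
          case True then show ?thesis using ti nthr[OF i'] nthr[OF j'] Pi(3)[of i j] by simp
        next
          case False
          then have "j = Suc m" using j' by simp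
          then show ?thesis using ti nthr[OF i'] nthr[OF j'] rel[OF ti] symE by auto
        qed
      next
        case False
        then have "i = Suc m" using i' by simp
        show ?thesis
        proof (cases "j < Suc m")
          case True then show ?thesis using \<open>i = Suc m\<close> nthr[OF i'] nthr[OF j'] rel[OF True] by auto
        next
          case False
          then have "j = Suc m" using j' by simp
          then show ?thesis using \<open>i = Suc m\<close> irrE nthr[OF i'] by auto
        qed
      qed
    qed
    moreover have "y \<in> set (P @ [r])" using yP by simp
    ultimately have "length (P @ [r]) \<le> length P" using mx by blast
    then show False by simp
  qed
  define S where "S = {i. i \<le> m - 2 \<and> (r, P!i) \<in> E}"
  have finS: "finite S" unfolding S_def by auto
  have neS: "S \<noteq> {}" using exi unfolding S_def by auto
  define i0 where "i0 = Max S"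
  have i0S: "i0 \<in> S" using finS neS unfolding i0_def by simp
  have i0m: "i0 \<le> m - 2" "(r, P!i0) \<in> E" using i0S unfolding S_def by auto
  have i0max: "\<And>j. j \<in> S \<Longrightarrow> j \<le> i0" using finS unfolding i0_def by simp
  have m2: "m \<ge> 2"
  proof (rule ccontr)
    assume "\<not> m \<ge> 2"
    then have "m = 1" "i0 = 0" using lenm i0m by auto
    then show False using i0m(2) r(4) symE unfolding a_def by auto
  qed
  define Q where "Q = drop i0 P"
  have lenQ: "length Q = Suc m - i0" unfolding Q_def using lenm by simp
  have Qn: "\<And>j. j < length Q \<Longrightarrow> Q ! j = P ! (i0 + j)" unfolding Q_def using lenm by simp
  have Qne: "Q \<noteq> []" using lenQ i0m lenm by auto
  have hdQ: "hd Q = P ! i0" using Qne Qn[of 0] by (simp add: hd_conv_nth)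
  have lastQ: "last Q = b"
    using Qne Qn[of "length Q - 1"] lenQ i0m lenm unfolding b_def by (simp add: last_conv_nth)
  have indQ: "ind E I Q" unfolding Q_def using ind_drop[OF P] .
  have rQ: "r \<notin> set Q" using rP unfolding Q_def by (auto dest: in_set_dropD)
  have mid: "\<forall>j. 0 < j \<and> j < length Q - 1 \<longrightarrow> (r, Q!j) \<notin> E"
  proof (intro allI impI)
    fix j assume j: "0 < j \<and> j < length Q - 1"
    then have qj: "Q ! j = P ! (i0 + j)" using Qn[of j] by linarith
    show "(r, Q!j) \<notin> E"
    proof (cases "i0 + j = m - 1")
      case True then show ?thesis using qj r symE unfolding a_def by auto
    next
      case False
      then have "i0 + j \<le> m - 2" using j lenQ by auto
      then have "(r, P!(i0+j)) \<in> E \<Longrightarrow> i0 + j \<in> S" unfolding S_def by simp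
      then show ?thesis using i0max[of "i0+j"] j qj by fastforce
    qed
  qed
  have cyc: "chordless_cycle E I (Q @ [r])"
    using cycle_lemma[OF s indQ _ rQ r(1)] lenQ i0m lenm m2 hdQ lastQ r(2) symE mid by auto
  moreover have "length (Q @ [r]) \<ge> 4" using lenQ i0m lenm m2 by auto
  moreover have "last P \<in> set (Q @ [r])" using lastQ lastb Qne by auto
  ultimately show ?thesis by blast
qed


lemma reach_sub: "(reduce_step E)\<^sup>*\<^sup>* N I \<Longrightarrow> I \<subseteq> N"
  by (induction rule: rtranclp_induct) (auto simp: reduce_step_def)

theorem proposition4:
  fixes N I :: "'a set" and E :: "('a \<times> 'a) set" and y :: 'a
  assumes "network N E"
    and "omega_outcome N E I"
    and "y \<in> I" and "\<exists>w \<in> I. (y, w) \<in> E"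
  shows "(\<exists>C. chordless_cycle E I C \<and> length C \<ge> 4 \<and> y \<in> set C) \<or>
         (\<exists>C1 C2 x z P. chordless_cycle E I C1 \<and> length C1 \<ge> 4 \<and>
            chordless_cycle E I C2 \<and> length C2 \<ge> 4 \<and>
            x \<in> set C1 \<and> z \<in> set C2 \<and> is_path E I P x z \<and> y \<in> set P)"
proof -
  have s: "sym E" and irr: "irrefl E" and finN: "finite N" using assms(1) unfolding network_def by auto
  have ns: "\<not> (\<exists>y z. subsumed E I z y)" and IN: "I \<subseteq> N"
    using assms(2) reach_sub unfolding omega_outcome_def by auto
  have finI: "finite I" using IN finN finite_subset by auto
  have irrE: "\<And>a. (a,a) \<notin> E" using irr by (auto simp: irrefl_def)
  have symE: "\<And>a b. (a,b) \<in> E \<Longrightarrow> (b,a) \<in> E" using s by (auto simp: sym_def)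
  obtain w where w: "w \<in> I" "(y,w) \<in> E" using assms(4) by blast
  have yw: "y \<noteq> w" using w irrE by auto
  have ind0: "ind E I [y, w]"
    unfolding ind_def
  proof (intro conjI allI impI)
    show "distinct [y, w]" using yw by simp
    show "set [y, w] \<subseteq> I" using w assms(3) by simp
    fix i j assume "i < length [y, w]" "j < length [y, w]"
    then have "i < 2" "j < 2" by auto
    then show "([y, w] ! i, [y, w] ! j) \<in> E \<longleftrightarrow> (j = Suc i \<or> i = Suc j)"
      using w irrE symE
      by (auto simp: less_Suc_eq numeral_2_eq_2)
  qed
  have bnd: "\<forall>Q. ind E I Q \<and> y \<in> set Q \<longrightarrow> length Q < Suc (card I)"
  proof (intro allI impI)
    fix Q assume "ind E I Q \<and> y \<in> set Q"
    then have "distinct Q" "set Q \<subseteq> I" unfolding ind_def by auto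
    then have "length Q \<le> card I" using finI by (metis card_mono distinct_card)
    then show "length Q < Suc (card I)" by simp
  qed
  obtain P where P: "ind E I P \<and> y \<in> set P"
    and mx: "\<forall>Q. ind E I Q \<and> y \<in> set Q \<longrightarrow> length Q \<le> length P"
    using Lattices_Big.ex_has_greatest_nat[of "\<lambda>Q. ind E I Q \<and> y \<in> set Q" "[y,w]" length "Suc (card I)"]
      ind0 bnd by auto
  have len: "length P \<ge> 2" using mx ind0 by fastforce
  obtain C2 where C2: "chordless_cycle E I C2" "length C2 \<ge> 4" "last P \<in> set C2"
    using end_cycle[OF s irr ns _ len _ mx] P by blast
  have Pr: "ind E I (rev P) \<and> y \<in> set (rev P)" using P ind_rev by auto
  obtain C1 where C1: "chordless_cycle E I C1" "length C1 \<ge> 4" "last (rev P) \<in> set C1"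
    using end_cycle[OF s irr ns _ _ _, of "rev P" y] Pr len mx by auto
  have Pne: "P \<noteq> []" using len by auto
  have "hd P \<in> set C1" using C1(3) Pne by (simp add: last_rev)
  moreover have "is_path E I P (hd P) (last P)" using ind_path P Pne by blast
  ultimately show ?thesis using C1 C2 P by blast
qed

end
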